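(* Let $\bar X\in\mathbb{R}_{\ge0}^{m\times n}$, $u\in\mathbb{R}^m$, $v\in\mathbb{R}^n$, and let $(p,q)$ be the row and column sums of any realization $Y$ of the biproportional Poisson model with base matrix $\bar X$ and parameters $(u,v)$. Then IPF (with zero-marginal handling) on $(\bar X,p,q)$ converges, i.e. the scaled matrices converge to a matrix with row sums $p$ and column sums $q$.
   Context: Biproportional Poisson model: entries $Y_{ij}$ independent with $Y_{ij}\sim\mathrm{Poisson}(e^{u_i}\bar X_{ij}e^{-v_j})$ if $\bar X_{ij}>0$ and $Y_{ij}=0$ otherwise; $p_i=\sum_jY_{ij}$, $q_j=\sum_iY_{ij}$. IPF with zero-marginal handling on $(X,p,q)$ with $\sum_ip_i=\sum_jq_j$: start with $d^0=\mathbf 1_m$, $d^1=\mathbf 1_n$; alternately update rows (for each $i$: $d^0_i\leftarrow0$ if $p_i=0$, else $d^0_i\leftarrow p_i/\sum_jX_{ij}d^1_j$) and columns (for each $j$: $d^1_j\leftarrow0$ if $q_j=0$, else $d^1_j\leftarrow q_j/\sum_iX_{ij}d^0_i$); after each update the scaled matrix is $\mathrm{diag}(d^0)X\mathrm{diag}(d^1)$. *)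

theory Defs
  imports "HOL-Analysis.Analysis"
begin

text \<open>Matrices are functions nat => nat => real, relevant on indices i < m, j < n.\<close>

definition poisson_prob :: "real \<Rightarrow> nat \<Rightarrow> real" where
  "poisson_prob \<mu> k = exp (- \<mu>) * \<mu> ^ k / fact k"

text \<open>Y is a realization (an outcome of positive probability) of the biproportional
  Poisson model with base matrix X and parameters u, v.\<close>
definition biprop_realization ::
  "nat \<Rightarrow> nat \<Rightarrow> (nat \<Rightarrow> nat \<Rightarrow> real) \<Rightarrow> (nat \<Rightarrow> real) \<Rightarrow> (nat \<Rightarrow> real)
   \<Rightarrow> (nat \<Rightarrow> nat \<Rightarrow> nat) \<Rightarrow> bool" where
  "biprop_realization m n X u v Y \<longleftrightarrow>
     (\<forall>i<m. \<forall>j<n.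
        (if X i j > 0 then poisson_prob (exp (u i) * X i j * exp (- v j)) (Y i j) > 0
         else Y i j = 0))"

definition ipf_row_update ::
  "nat \<Rightarrow> (nat \<Rightarrow> nat \<Rightarrow> real) \<Rightarrow> (nat \<Rightarrow> real) \<Rightarrow> (nat \<Rightarrow> real) \<Rightarrow> nat \<Rightarrow> real" where
  "ipf_row_update n X p d1 = (\<lambda>i. if p i = 0 then 0 else p i / (\<Sum>j<n. X i j * d1 j))"

definition ipf_col_update ::
  "nat \<Rightarrow> (nat \<Rightarrow> nat \<Rightarrow> real) \<Rightarrow> (nat \<Rightarrow> real) \<Rightarrow> (nat \<Rightarrow> real) \<Rightarrow> nat \<Rightarrow> real" where
  "ipf_col_update m X q d0 = (\<lambda>j. if q j = 0 then 0 else q j / (\<Sum>i<m. X i j * d0 i))"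

text \<open>Scaling vectors (d0, d1) after k single updates: step 0 is the all-ones start;
  odd steps are row updates, even positive steps are column updates.\<close>
fun ipf_iter ::
  "nat \<Rightarrow> nat \<Rightarrow> (nat \<Rightarrow> nat \<Rightarrow> real) \<Rightarrow> (nat \<Rightarrow> real) \<Rightarrow> (nat \<Rightarrow> real) \<Rightarrow> nat
   \<Rightarrow> (nat \<Rightarrow> real) \<times> (nat \<Rightarrow> real)" where
  "ipf_iter m n X p q 0 = ((\<lambda>_. 1), (\<lambda>_. 1))"
| "ipf_iter m n X p q (Suc k) =
     (let (d0, d1) = ipf_iter m n X p q k in
      if even k then (ipf_row_update n X p d1, d1)
      else (d0, ipf_col_update m X q d0))"

definition ipf_scaled ::
  "nat \<Rightarrow> nat \<Rightarrow> (nat \<Rightarrow> nat \<Rightarrow> real) \<Rightarrow> (nat \<Rightarrow> real) \<Rightarrow> (nat \<Rightarrow> real) \<Rightarrow> nat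
   \<Rightarrow> nat \<Rightarrow> nat \<Rightarrow> real" where
  "ipf_scaled m n X p q k = (let (d0, d1) = ipf_iter m n X p q k in (\<lambda>i j. d0 i * X i j * d1 j))"

end

theory Submission
  imports Defs
begin

lemma finite_subseq:
  fixes x :: "nat \<Rightarrow> 'a \<Rightarrow> real"
  assumes "finite S" "\<And>k s. s \<in> S \<Longrightarrow> \<bar>x k s\<bar> \<le> M"
  shows "\<exists>\<sigma>. strict_mono \<sigma> \<and> (\<forall>s\<in>S. convergent (\<lambda>k. x (\<sigma> k) s))"
  using assms
proof (induction S rule: finite_induct)
  case empty
  then show ?case by (auto intro: strict_mono_id[unfolded id_def])
next
  case (insert s0 S)
  then obtain \<sigma> where s: "strict_mono \<sigma>" "\<forall>s\<in>S. convergent (\<lambda>k. x (\<sigma> k) s)" by auto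
  obtain \<tau> where t: "strict_mono \<tau>" "monoseq (\<lambda>k. x (\<sigma> (\<tau> k)) s0)"
    using seq_monosub[of "\<lambda>k. x (\<sigma> k) s0"] by auto
  have "Bseq (\<lambda>k. x (\<sigma> (\<tau> k)) s0)"
    by (rule BseqI'[where K=M]) (use insert.prems in auto)
  then have c0: "convergent (\<lambda>k. x (\<sigma> (\<tau> k)) s0)" using t Bseq_monoseq_convergent by blast
  have "convergent (\<lambda>k. x (\<sigma> (\<tau> k)) s)" if "s \<in> S" for s
    using convergent_subseq_convergent[OF s(2)[rule_format, OF that] t(1)] by (simp add: o_def)
  moreover have "strict_mono (\<sigma> \<circ> \<tau>)" using s t strict_mono_o by blast
  ultimately show ?case using c0 by (intro exI[of _ "\<sigma> \<circ> \<tau>"]) (auto simp: o_def)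
qed

lemma key_ineq:
  fixes x y :: real
  assumes "x \<ge> 0" "y \<ge> 0" "x > 0 \<Longrightarrow> y > 0"
  shows "x * ln (x / y) \<ge> x - y + (sqrt x - sqrt y)^2"
proof (cases "x = 0")
  case True then show ?thesis using assms by (simp add: power2_eq_square)
next
  case False
  then have xp: "x > 0" and yp: "y > 0" using assms by auto
  define s where "s = sqrt x"
  define t where "t = sqrt y"
  have sp: "s > 0" and tp: "t > 0" using xp yp by (auto simp: s_def t_def)
  have x: "x = s^2" and y: "y = t^2" using assms by (auto simp: s_def t_def)
  have "ln (x/y) = 2 * ln (s/t)" using sp tp by (simp add: x y power_divide[symmetric] ln_realpow)
  also have "ln (s/t) = - ln (t/s)" using sp tp by (simp add: ln_div)
  finally have e: "ln (x/y) = - 2 * ln (t/s)" by simp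
  have "ln (t/s) \<le> t/s - 1" using sp tp by (intro ln_le_minus_one) auto
  then have "s^2 * ln (t/s) \<le> s^2 * (t/s - 1)" using sp by (intro mult_left_mono) auto
  also have "s^2 * (t/s - 1) = s*t - s^2" using sp by (simp add: field_simps power2_eq_square)
  finally have h: "s^2 * ln (t/s) \<le> s*t - s^2" .
  have "x * ln (x/y) = -2 * (s^2 * ln (t/s))" using e x by simp
  with h have "2 * s^2 - 2 * s * t \<le> x * ln (x/y)" by linarith
  moreover have "x - y + (sqrt x - sqrt y)^2 = 2 * s^2 - 2 * s * t"
    unfolding x y s_def[symmetric] t_def[symmetric] using sp tp by (simp add: power2_eq_square algebra_simps)
  ultimately show ?thesis by simp
qed

lemma sqrt_conv:
  fixes g :: "nat \<Rightarrow> real"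
  assumes "(\<lambda>k. (sqrt (g k) - sqrt c)^2) \<longlonglongrightarrow> 0" "\<And>k. g k \<ge> 0" "c \<ge> 0"
  shows "g \<longlonglongrightarrow> c"
proof -
  have "(\<lambda>k. sqrt ((sqrt (g k) - sqrt c)^2)) \<longlonglongrightarrow> sqrt 0" by (rule tendsto_real_sqrt[OF assms(1)])
  then have "(\<lambda>k. \<bar>sqrt (g k) - sqrt c\<bar>) \<longlonglongrightarrow> 0" by simp
  then have "(\<lambda>k. sqrt (g k) - sqrt c) \<longlonglongrightarrow> 0" by (simp add: tendsto_rabs_zero_iff)
  then have "(\<lambda>k. (sqrt (g k) - sqrt c) + sqrt c) \<longlonglongrightarrow> 0 + sqrt c" by (intro tendsto_add) auto
  then have "(\<lambda>k. (sqrt (g k))^2) \<longlonglongrightarrow> (sqrt c)^2" by (intro tendsto_power) simp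
  then show ?thesis using assms(2,3) by simp
qed

lemma sq_sandwich:
  fixes f h :: "nat \<Rightarrow> real"
  assumes "eventually (\<lambda>k. 0 \<le> f k \<and> f k \<le> h k) sequentially" "h \<longlonglongrightarrow> 0"
  shows "f \<longlonglongrightarrow> 0"
  by (rule real_tendsto_sandwich[where f="\<lambda>_. 0" and h=h])
     (use assms in \<open>auto elim: eventually_mono\<close>)

lemma iter_Suc: "ipf_iter m n X p q (Suc k) = (if even k then (ipf_row_update n X p (snd (ipf_iter m n X p q k)), snd (ipf_iter m n X p q k)) else (fst (ipf_iter m n X p q k), ipf_col_update m X q (fst (ipf_iter m n X p q k))))"
  by (simp add: Let_def split_def)

locale ipfl =
  fixes m n :: nat and X :: "nat \<Rightarrow> nat \<Rightarrow> real" and p q :: "nat \<Rightarrow> real"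
    and Y :: "nat \<Rightarrow> nat \<Rightarrow> nat"
  assumes Xnn: "\<And>i j. i<m \<Longrightarrow> j<n \<Longrightarrow> X i j \<ge> 0"
    and Ysupp: "\<And>i j. i<m \<Longrightarrow> j<n \<Longrightarrow> \<not> X i j > 0 \<Longrightarrow> Y i j = 0"
    and pdef: "\<And>i. p i = real (\<Sum>j<n. Y i j)"
    and qdef: "\<And>j. q j = real (\<Sum>i<m. Y i j)"
begin

definition "a k = fst (ipf_iter m n X p q k)"
definition "b k = snd (ipf_iter m n X p q k)"
definition "A k i j = a k i * X i j * b k j"
definition "N = (\<Sum>i<m. p i)"
definition "Psi k = (\<Sum>i<m. p i * ln (a k i)) + (\<Sum>j<n. q j * ln (b k j))"

lemma a_Suc: "a (Suc k) = (if even k then ipf_row_update n X p (b k) else a k)"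
  unfolding a_def b_def iter_Suc by simp
lemma b_Suc: "b (Suc k) = (if even k then b k else ipf_col_update m X q (a k))"
  unfolding a_def b_def iter_Suc by simp
lemma a0: "a 0 = (\<lambda>_. 1)" and b0: "b 0 = (\<lambda>_. 1)"
  by (simp_all add: a_def b_def)

lemma p_nn: "p i \<ge> 0" and q_nn: "q j \<ge> 0"
  by (simp_all add: pdef qdef sum_nonneg)

lemma Y_le_p: "j < n \<Longrightarrow> real (Y i j) \<le> p i"
  unfolding pdef of_nat_sum by (intro member_le_sum) auto
lemma Y_le_q: "i < m \<Longrightarrow> real (Y i j) \<le> q j"
  unfolding qdef of_nat_sum by (intro member_le_sum) auto

lemma Y_pos: "i<m \<Longrightarrow> j<n \<Longrightarrow> Y i j > 0 \<Longrightarrow> X i j > 0 \<and> p i > 0 \<and> q j > 0"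
  using Ysupp[of i j] Y_le_p[of j i] Y_le_q[of i j] by force

lemma p_pos_ex: "i<m \<Longrightarrow> p i > 0 \<Longrightarrow> \<exists>j<n. X i j > 0 \<and> q j > 0"
proof -
  assume "i<m" "p i > 0"
  then have "(\<Sum>j<n. Y i j) \<noteq> 0" unfolding pdef by (metis of_nat_0 less_irrefl)
  then obtain j where "j<n" "Y i j > 0" by (metis lessThan_iff not_gr0 sum.neutral)
  then show ?thesis using Y_pos \<open>i<m\<close> by blast
qed

lemma q_pos_ex: "j<n \<Longrightarrow> q j > 0 \<Longrightarrow> \<exists>i<m. X i j > 0 \<and> p i > 0"
proof -
  assume "j<n" "q j > 0"
  then have "(\<Sum>i<m. Y i j) \<noteq> 0" unfolding qdef by (metis of_nat_0 less_irrefl)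
  then obtain i where "i<m" "Y i j > 0" by (metis lessThan_iff not_gr0 sum.neutral)
  then show ?thesis using Y_pos \<open>j<n\<close> by blast
qed

lemma sum_q: "(\<Sum>j<n. q j) = N"
  unfolding N_def pdef qdef by (simp add: sum.swap[of _ "{..<n}"])

lemma row_den_pos:
  assumes "i<m" "p i > 0" "\<forall>j<n. d j \<ge> 0 \<and> (q j > 0 \<longrightarrow> d j > 0)"
  shows "(\<Sum>j<n. X i j * d j) > 0"
proof -
  obtain j0 where j0: "j0<n" "X i j0 > 0" "q j0 > 0" using p_pos_ex assms by blast
  have "X i j0 * d j0 > 0" using j0 assms by auto
  also have "X i j0 * d j0 \<le> (\<Sum>j<n. X i j * d j)"
    using j0 assms Xnn by (intro member_le_sum) auto
  finally show ?thesis .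
qed

lemma col_den_pos:
  assumes "j<n" "q j > 0" "\<forall>i<m. d i \<ge> 0 \<and> (p i > 0 \<longrightarrow> d i > 0)"
  shows "(\<Sum>i<m. X i j * d i) > 0"
proof -
  obtain i0 where i0: "i0<m" "X i0 j > 0" "p i0 > 0" using q_pos_ex assms by blast
  have "X i0 j * d i0 > 0" using i0 assms by auto
  also have "X i0 j * d i0 \<le> (\<Sum>i<m. X i j * d i)"
    using i0 assms Xnn by (intro member_le_sum) auto
  finally show ?thesis .
qed

lemma inv: "(\<forall>i<m. a k i \<ge> 0 \<and> (p i > 0 \<longrightarrow> a k i > 0)) \<and> (\<forall>j<n. b k j \<ge> 0 \<and> (q j > 0 \<longrightarrow> b k j > 0))"
proof (induction k)
  case 0 then show ?case by (simp add: a0 b0)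
next
  case (Suc k)
  show ?case
  proof (cases "even k")
    case True
    have "a (Suc k) i \<ge> 0 \<and> (p i > 0 \<longrightarrow> a (Suc k) i > 0)" if "i<m" for i
      using row_den_pos[of i "b k"] Suc.IH that p_nn[of i]
      by (auto simp: a_Suc True ipf_row_update_def)
    then show ?thesis using Suc.IH by (simp add: b_Suc True)
  next
    case False
    have "b (Suc k) j \<ge> 0 \<and> (q j > 0 \<longrightarrow> b (Suc k) j > 0)" if "j<n" for j
      using col_den_pos[of j "a k"] Suc.IH that q_nn[of j]
      by (auto simp: b_Suc False ipf_col_update_def)
    then show ?thesis using Suc.IH by (simp add: a_Suc False)
  qed
qed

lemma a_nn: "i<m \<Longrightarrow> a k i \<ge> 0" and a_pos: "i<m \<Longrightarrow> p i > 0 \<Longrightarrow> a k i > 0"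
  and b_nn: "j<n \<Longrightarrow> b k j \<ge> 0" and b_pos: "j<n \<Longrightarrow> q j > 0 \<Longrightarrow> b k j > 0"
  using inv[of k] by auto

lemma a_zero: "k \<ge> 1 \<Longrightarrow> p i = 0 \<Longrightarrow> a k i = 0"
proof (induction k rule: dec_induct)
  case base then show ?case by (simp add: a_Suc[of 0, simplified] ipf_row_update_def)
next
  case (step k) then show ?case by (simp add: a_Suc ipf_row_update_def)
qed

lemma b_zero: "k \<ge> 2 \<Longrightarrow> q j = 0 \<Longrightarrow> b k j = 0"
proof (induction k rule: dec_induct)
  case base then show ?case by (simp add: numeral_2_eq_2 b_Suc ipf_col_update_def)
next
  case (step k) then show ?case by (simp add: b_Suc ipf_col_update_def)
qed

lemma A_nn: "i<m \<Longrightarrow> j<n \<Longrightarrow> A k i j \<ge> 0"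
  unfolding A_def using a_nn b_nn Xnn by auto

lemma row_sums: "even k \<Longrightarrow> i<m \<Longrightarrow> (\<Sum>j<n. A (Suc k) i j) = p i"
proof -
  assume "even k" "i<m"
  have "(\<Sum>j<n. A (Suc k) i j) = a (Suc k) i * (\<Sum>j<n. X i j * b k j)"
    unfolding A_def using \<open>even k\<close> by (simp add: b_Suc sum_distrib_left mult.assoc)
  also have "\<dots> = p i"
    using row_den_pos[of i "b k"] \<open>i<m\<close> inv[of k] p_nn[of i] \<open>even k\<close>
    by (force simp: a_Suc ipf_row_update_def)
  finally show ?thesis .
qed

lemma col_sums: "odd k \<Longrightarrow> j<n \<Longrightarrow> (\<Sum>i<m. A (Suc k) i j) = q j"
proof -
  assume "odd k" "j<n"
  have "(\<Sum>i<m. A (Suc k) i j) = b (Suc k) j * (\<Sum>i<m. X i j * a k i)"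
    unfolding A_def using \<open>odd k\<close> by (simp add: a_Suc sum_distrib_left mult.assoc mult.commute mult.left_commute)
  also have "\<dots> = q j"
    using col_den_pos[of j "a k"] \<open>j<n\<close> inv[of k] q_nn[of j] \<open>odd k\<close>
    by (force simp: b_Suc ipf_col_update_def)
  finally show ?thesis .
qed

lemma total: "k \<ge> 1 \<Longrightarrow> (\<Sum>i<m. \<Sum>j<n. A k i j) = N"
proof -
  assume "k \<ge> 1"
  then obtain k' where k: "k = Suc k'" by (cases k) auto
  show ?thesis
  proof (cases "even k'")
    case True then show ?thesis unfolding k N_def by (simp add: row_sums)
  next
    case False
    have "(\<Sum>i<m. \<Sum>j<n. A k i j) = (\<Sum>j<n. \<Sum>i<m. A k i j)" by (rule sum.swap)
    also have "\<dots> = N" unfolding k using False by (simp add: col_sums sum_q)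
    finally show ?thesis .
  qed
qed

definition "good Z \<longleftrightarrow> (\<forall>i<m. \<forall>j<n. Z i j \<ge> 0 \<and> (Z i j > 0 \<longrightarrow> X i j > 0 \<and> p i > 0 \<and> q j > 0))
   \<and> (\<forall>i<m. (\<Sum>j<n. Z i j) = p i) \<and> (\<forall>j<n. (\<Sum>i<m. Z i j) = q j)"
definition "CZ Z = (\<Sum>i<m. \<Sum>j<n. Z i j * ln (Z i j)) - (\<Sum>i<m. \<Sum>j<n. Z i j * ln (X i j))"

lemma Z_ident:
  assumes "good Z"
  shows "(\<Sum>i<m. \<Sum>j<n. Z i j * ln (A k i j)) = Psi k + (\<Sum>i<m. \<Sum>j<n. Z i j * ln (X i j))"
proof -
  have pw: "Z i j * ln (A k i j) = Z i j * ln (a k i) + Z i j * ln (X i j) + Z i j * ln (b k j)"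
    if "i<m" "j<n" for i j
  proof (cases "Z i j > 0")
    case True
    then have "X i j > 0" "a k i > 0" "b k j > 0" using assms that a_pos b_pos unfolding good_def by auto
    then show ?thesis unfolding A_def by (simp add: ln_mult distrib_left)
  next
    case False
    then have "Z i j = 0" using assms that unfolding good_def by force
    then show ?thesis by simp
  qed
  have "(\<Sum>i<m. \<Sum>j<n. Z i j * ln (A k i j)) =
     (\<Sum>i<m. \<Sum>j<n. Z i j * ln (a k i)) + (\<Sum>i<m. \<Sum>j<n. Z i j * ln (X i j)) + (\<Sum>i<m. \<Sum>j<n. Z i j * ln (b k j))"
    by (simp add: pw sum.distrib)
  also have "(\<Sum>i<m. \<Sum>j<n. Z i j * ln (a k i)) = (\<Sum>i<m. p i * ln (a k i))"
    using assms unfolding good_def by (simp add: sum_distrib_right[symmetric])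
  also have "(\<Sum>i<m. \<Sum>j<n. Z i j * ln (b k j)) = (\<Sum>j<n. \<Sum>i<m. Z i j * ln (b k j))"
    by (rule sum.swap)
  also have "\<dots> = (\<Sum>j<n. q j * ln (b k j))"
    using assms unfolding good_def by (simp add: sum_distrib_right[symmetric])
  finally show ?thesis unfolding Psi_def by simp
qed

lemma D_eq:
  assumes "good Z"
  shows "(\<Sum>i<m. \<Sum>j<n. Z i j * ln (Z i j / A k i j)) = CZ Z - Psi k"
proof -
  have pw: "Z i j * ln (Z i j / A k i j) = Z i j * ln (Z i j) - Z i j * ln (A k i j)"
    if "i<m" "j<n" for i j
  proof (cases "Z i j > 0")
    case True
    then have "X i j > 0" "a k i > 0" "b k j > 0" using assms that a_pos b_pos unfolding good_def by auto
    then have "A k i j > 0" unfolding A_def by simp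
    then show ?thesis using True by (simp add: ln_div right_diff_distrib)
  next
    case False
    then have "Z i j = 0" using assms that unfolding good_def by force
    then show ?thesis by simp
  qed
  have "(\<Sum>i<m. \<Sum>j<n. Z i j * ln (Z i j / A k i j)) =
     (\<Sum>i<m. \<Sum>j<n. Z i j * ln (Z i j)) - (\<Sum>i<m. \<Sum>j<n. Z i j * ln (A k i j))"
    by (simp add: pw sum_subtractf)
  then show ?thesis using Z_ident[OF assms, of k] unfolding CZ_def by simp
qed

lemma hell:
  assumes "good Z" "k \<ge> 1"
  shows "(\<Sum>i<m. \<Sum>j<n. (sqrt (Z i j) - sqrt (A k i j))^2) \<le> CZ Z - Psi k"
proof -
  have pw: "Z i j - A k i j + (sqrt (Z i j) - sqrt (A k i j))^2 \<le> Z i j * ln (Z i j / A k i j)"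
    if "i<m" "j<n" for i j
  proof (rule key_ineq)
    show "Z i j \<ge> 0" using assms that unfolding good_def by auto
    show "A k i j \<ge> 0" using A_nn that by auto
    assume "Z i j > 0"
    then have "X i j > 0" "a k i > 0" "b k j > 0" using assms that a_pos b_pos unfolding good_def by auto
    then show "A k i j > 0" unfolding A_def by simp
  qed
  have "(\<Sum>i<m. \<Sum>j<n. Z i j - A k i j + (sqrt (Z i j) - sqrt (A k i j))^2) \<le>
        (\<Sum>i<m. \<Sum>j<n. Z i j * ln (Z i j / A k i j))"
    using pw by (intro sum_mono) auto
  moreover have "(\<Sum>i<m. \<Sum>j<n. Z i j - A k i j + (sqrt (Z i j) - sqrt (A k i j))^2) =
     (\<Sum>i<m. \<Sum>j<n. Z i j) - (\<Sum>i<m. \<Sum>j<n. A k i j) + (\<Sum>i<m. \<Sum>j<n. (sqrt (Z i j) - sqrt (A k i j))^2)"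
    by (simp add: sum.distrib sum_subtractf)
  moreover have "(\<Sum>i<m. \<Sum>j<n. Z i j) = N" using assms unfolding good_def N_def by simp
  moreover have "(\<Sum>i<m. \<Sum>j<n. A k i j) = N" using total assms by simp
  ultimately show ?thesis using D_eq[OF assms(1), of k] by simp
qed

lemma incr_even:
  assumes "even k" "k \<ge> 1"
  shows "(\<Sum>i<m. (sqrt (p i) - sqrt (\<Sum>j<n. A k i j))^2) \<le> Psi (Suc k) - Psi k"
proof -
  define r where "r i = (\<Sum>j<n. A k i j)" for i
  have r_eq: "r i = a k i * (\<Sum>j<n. X i j * b k j)" for i
    unfolding r_def A_def by (simp add: sum_distrib_left mult.assoc)
  have pw: "p i * ln (a (Suc k) i) - p i * ln (a k i) = p i * ln (p i / r i)" if "i<m" for i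
  proof (cases "p i > 0")
    case True
    have s: "(\<Sum>j<n. X i j * b k j) > 0" using row_den_pos[of i "b k"] that True inv[of k] by auto
    have "a k i > 0" using a_pos that True by auto
    then show ?thesis using s True assms(1)
      by (simp add: a_Suc ipf_row_update_def r_eq ln_div ln_mult algebra_simps)
  next
    case False then have "p i = 0" using p_nn[of i] by simp
    then show ?thesis by simp
  qed
  have key: "p i - r i + (sqrt (p i) - sqrt (r i))^2 \<le> p i * ln (p i / r i)" if "i<m" for i
  proof (rule key_ineq)
    show "p i \<ge> 0" by (rule p_nn)
    show "r i \<ge> 0" unfolding r_def using A_nn that by (intro sum_nonneg) auto
    assume "p i > 0"
    have s: "(\<Sum>j<n. X i j * b k j) > 0" using row_den_pos[of i "b k"] that \<open>p i > 0\<close> inv[of k] by auto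
    have "a k i > 0" using a_pos that \<open>p i > 0\<close> by auto
    then show "r i > 0" using s r_eq by simp
  qed
  have "Psi (Suc k) - Psi k = (\<Sum>i<m. p i * ln (a (Suc k) i) - p i * ln (a k i))"
    unfolding Psi_def using assms(1) by (simp add: b_Suc sum_subtractf)
  also have "\<dots> = (\<Sum>i<m. p i * ln (p i / r i))" using pw by simp
  finally have e: "Psi (Suc k) - Psi k = (\<Sum>i<m. p i * ln (p i / r i))" .
  have "(\<Sum>i<m. p i - r i + (sqrt (p i) - sqrt (r i))^2) \<le> (\<Sum>i<m. p i * ln (p i / r i))"
    using key by (intro sum_mono) auto
  moreover have "(\<Sum>i<m. p i - r i + (sqrt (p i) - sqrt (r i))^2) =
     (\<Sum>i<m. p i) - (\<Sum>i<m. r i) + (\<Sum>i<m. (sqrt (p i) - sqrt (r i))^2)"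
    by (simp add: sum.distrib sum_subtractf)
  moreover have "(\<Sum>i<m. r i) = N" unfolding r_def using total assms by simp
  ultimately show ?thesis using e unfolding r_def N_def by simp
qed

lemma incr_odd:
  assumes "odd k"
  shows "(\<Sum>j<n. (sqrt (q j) - sqrt (\<Sum>i<m. A k i j))^2) \<le> Psi (Suc k) - Psi k"
proof -
  have k1: "k \<ge> 1" using assms by (cases k) auto
  define r where "r j = (\<Sum>i<m. A k i j)" for j
  have r_eq: "r j = b k j * (\<Sum>i<m. X i j * a k i)" for j
    unfolding r_def A_def by (simp add: sum_distrib_left mult.assoc mult.commute mult.left_commute)
  have pw: "q j * ln (b (Suc k) j) - q j * ln (b k j) = q j * ln (q j / r j)" if "j<n" for j
  proof (cases "q j > 0")
    case True
    have s: "(\<Sum>i<m. X i j * a k i) > 0" using col_den_pos[of j "a k"] that True inv[of k] by auto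
    have "b k j > 0" using b_pos that True by auto
    then show ?thesis using s True assms(1)
      by (simp add: b_Suc ipf_col_update_def r_eq ln_div ln_mult algebra_simps)
  next
    case False then have "q j = 0" using q_nn[of j] by simp
    then show ?thesis by simp
  qed
  have key: "q j - r j + (sqrt (q j) - sqrt (r j))^2 \<le> q j * ln (q j / r j)" if "j<n" for j
  proof (rule key_ineq)
    show "q j \<ge> 0" by (rule q_nn)
    show "r j \<ge> 0" unfolding r_def using A_nn that by (intro sum_nonneg) auto
    assume "q j > 0"
    have s: "(\<Sum>i<m. X i j * a k i) > 0" using col_den_pos[of j "a k"] that \<open>q j > 0\<close> inv[of k] by auto
    have "b k j > 0" using b_pos that \<open>q j > 0\<close> by auto
    then show "r j > 0" using s r_eq by simp
  qed
  have "Psi (Suc k) - Psi k = (\<Sum>j<n. q j * ln (b (Suc k) j) - q j * ln (b k j))"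
    unfolding Psi_def using assms(1) by (simp add: a_Suc sum_subtractf)
  also have "\<dots> = (\<Sum>j<n. q j * ln (q j / r j))" using pw by simp
  finally have e: "Psi (Suc k) - Psi k = (\<Sum>j<n. q j * ln (q j / r j))" .
  have "(\<Sum>j<n. q j - r j + (sqrt (q j) - sqrt (r j))^2) \<le> (\<Sum>j<n. q j * ln (q j / r j))"
    using key by (intro sum_mono) auto
  moreover have "(\<Sum>j<n. q j - r j + (sqrt (q j) - sqrt (r j))^2) =
     (\<Sum>j<n. q j) - (\<Sum>j<n. r j) + (\<Sum>j<n. (sqrt (q j) - sqrt (r j))^2)"
    by (simp add: sum.distrib sum_subtractf)
  moreover have "(\<Sum>j<n. r j) = N" unfolding r_def using total[OF k1] sum.swap[of "A k"] by simp
  ultimately show ?thesis using e sum_q unfolding r_def by simp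
qed

lemma good_Y: "good (\<lambda>i j. real (Y i j))"
  unfolding good_def using Y_pos by (auto simp: pdef qdef)

lemma Psi_mono: "k \<ge> 1 \<Longrightarrow> Psi k \<le> Psi (Suc k)"
proof -
  assume k: "k \<ge> 1"
  show ?thesis
  proof (cases "even k")
    case True
    have "0 \<le> (\<Sum>i<m. (sqrt (p i) - sqrt (\<Sum>j<n. A k i j))^2)" by (intro sum_nonneg) auto
    then show ?thesis using incr_even[OF True k] by simp
  next
    case False
    have "0 \<le> (\<Sum>j<n. (sqrt (q j) - sqrt (\<Sum>i<m. A k i j))^2)" by (intro sum_nonneg) auto
    then show ?thesis using incr_odd[OF False] by simp
  qed
qed

lemma Psi_conv: "\<exists>P. Psi \<longlonglongrightarrow> P"
proof -
  have "incseq (\<lambda>l. Psi (Suc l))" by (rule incseq_SucI) (simp add: Psi_mono)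
  moreover have "\<forall>l. Psi (Suc l) \<le> CZ (\<lambda>i j. real (Y i j))"
  proof
    fix l
    have "0 \<le> (\<Sum>i<m. \<Sum>j<n. (sqrt (real (Y i j)) - sqrt (A (Suc l) i j))^2)"
      by (intro sum_nonneg) auto
    then show "Psi (Suc l) \<le> CZ (\<lambda>i j. real (Y i j))" using hell[OF good_Y, of "Suc l"] by simp
  qed
  ultimately obtain P where "(\<lambda>l. Psi (Suc l)) \<longlonglongrightarrow> P" using incseq_convergent by blast
  then show ?thesis using filterlim_sequentially_Suc by blast
qed

lemma A_le_N: "i<m \<Longrightarrow> j<n \<Longrightarrow> k \<ge> 1 \<Longrightarrow> A k i j \<le> N"
proof -
  assume ij: "i<m" "j<n" and k: "k \<ge> 1"
  have "A k i j \<le> (\<Sum>j<n. A k i j)" using ij A_nn by (intro member_le_sum) auto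
  also have "\<dots> \<le> (\<Sum>i<m. \<Sum>j<n. A k i j)" using ij A_nn by (intro member_le_sum sum_nonneg) auto
  finally show ?thesis using total[OF k] by simp
qed

lemma main: "\<exists>L. (\<forall>i<m. \<forall>j<n. (\<lambda>k. A k i j) \<longlonglongrightarrow> L i j) \<and> good L"
proof -
  obtain P where P: "Psi \<longlonglongrightarrow> P" using Psi_conv by blast
  have incr0: "(\<lambda>k. Psi (Suc k) - Psi k) \<longlonglongrightarrow> 0"
    using tendsto_diff[OF P[THEN LIMSEQ_Suc] P] by simp
  define e where "e l = 2 * l + 2" for l :: nat
  have e_mono: "strict_mono e" unfolding e_def by (rule strict_monoI) simp
  have incr_e: "(\<lambda>l. Psi (Suc (e l)) - Psi (e l)) \<longlonglongrightarrow> 0"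
    using LIMSEQ_subseq_LIMSEQ[OF incr0 e_mono] by (simp add: o_def)
  have rows: "(\<lambda>l. \<Sum>j<n. A (e l) i j) \<longlonglongrightarrow> p i" if "i<m" for i
  proof (rule sqrt_conv)
    show "(\<lambda>l. (sqrt (\<Sum>j<n. A (e l) i j) - sqrt (p i))^2) \<longlonglongrightarrow> 0"
    proof (rule sq_sandwich[OF _ incr_e], intro always_eventually allI conjI)
      fix l
      show "0 \<le> (sqrt (\<Sum>j<n. A (e l) i j) - sqrt (p i))^2" by simp
      have ev: "even (e l)" "e l \<ge> 1" unfolding e_def by auto
      have "(sqrt (p i) - sqrt (\<Sum>j<n. A (e l) i j))^2 \<le> (\<Sum>i<m. (sqrt (p i) - sqrt (\<Sum>j<n. A (e l) i j))^2)"
        using that by (intro member_le_sum) auto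
      also have "\<dots> \<le> Psi (Suc (e l)) - Psi (e l)" by (rule incr_even[OF ev])
      finally show "(sqrt (\<Sum>j<n. A (e l) i j) - sqrt (p i))^2 \<le> Psi (Suc (e l)) - Psi (e l)"
        by (simp add: power2_commute)
    qed
    show "\<And>l. 0 \<le> (\<Sum>j<n. A (e l) i j)" using A_nn that by (intro sum_nonneg) auto
    show "0 \<le> p i" by (rule p_nn)
  qed
  have cols: "(\<Sum>i<m. A (e l) i j) = q j" if "j<n" for j l
  proof -
    have "e l = Suc (2*l+1)" unfolding e_def by simp
    then show ?thesis using col_sums[of "2*l+1" j] that by simp
  qed
  obtain \<sigma> where \<sigma>: "strict_mono \<sigma>"
     "\<forall>s\<in>{..<m}\<times>{..<n}. convergent (\<lambda>l. (\<lambda>l s. A (e l) (fst s) (snd s)) (\<sigma> l) s)"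
    using finite_subseq[of "{..<m}\<times>{..<n}" "\<lambda>l s. A (e l) (fst s) (snd s)" N]
  proof -
    have "\<bar>A (e l) (fst s) (snd s)\<bar> \<le> N" if "s \<in> {..<m}\<times>{..<n}" for l s
      using that A_nn A_le_N[of "fst s" "snd s" "e l"] unfolding e_def by auto
    then show ?thesis using finite_subseq[of "{..<m}\<times>{..<n}" "\<lambda>l s. A (e l) (fst s) (snd s)" N] that
      by auto
  qed
  define L where "L i j = lim (\<lambda>l. A (e (\<sigma> l)) i j)" for i j
  have Lc: "(\<lambda>l. A (e (\<sigma> l)) i j) \<longlonglongrightarrow> L i j" if "i<m" "j<n" for i j
    using \<sigma>(2) that unfolding L_def convergent_LIMSEQ_iff by auto
  have es_mono: "strict_mono (e \<circ> \<sigma>)" using e_mono \<sigma>(1) strict_mono_o by blast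
  have L_nn: "0 \<le> L i j" if ij: "i<m" "j<n" for i j
    using Lc[OF ij] A_nn[OF ij] by (intro LIMSEQ_le_const) auto
  have L_supp: "X i j > 0 \<and> p i > 0 \<and> q j > 0" if ij: "i<m" "j<n" and Lp: "L i j > 0" for i j
  proof -
    from order_tendstoD(1)[OF Lc[OF ij] Lp] obtain N0 where "\<forall>l\<ge>N0. A (e (\<sigma> l)) i j > 0"
      unfolding eventually_sequentially by blast
    then obtain l where "A (e (\<sigma> l)) i j > 0" by blast
    moreover have "e (\<sigma> l) \<ge> 2" unfolding e_def by simp
    ultimately have "a (e (\<sigma> l)) i \<noteq> 0" "b (e (\<sigma> l)) j \<noteq> 0" "X i j \<noteq> 0"
      unfolding A_def by auto
    moreover have "p i \<noteq> 0"
    proof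
      assume "p i = 0"
      then have "a (e (\<sigma> l)) i = 0" by (rule a_zero[rotated]) (use \<open>e (\<sigma> l) \<ge> 2\<close> in simp)
      then show False using \<open>a (e (\<sigma> l)) i \<noteq> 0\<close> by simp
    qed
    moreover have "q j \<noteq> 0"
    proof
      assume "q j = 0"
      then have "b (e (\<sigma> l)) j = 0" by (rule b_zero[rotated]) (use \<open>e (\<sigma> l) \<ge> 2\<close> in simp)
      then show False using \<open>b (e (\<sigma> l)) j \<noteq> 0\<close> by simp
    qed
    ultimately show "X i j > 0 \<and> p i > 0 \<and> q j > 0" using p_nn[of i] q_nn[of j] Xnn[OF ij] by auto
  qed
  have L_rows: "(\<Sum>j<n. L i j) = p i" if i: "i<m" for i
  proof -
    have "(\<lambda>l. \<Sum>j<n. A (e (\<sigma> l)) i j) \<longlonglongrightarrow> (\<Sum>j<n. L i j)"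
      by (rule tendsto_sum) (use Lc i in blast)
    moreover have "(\<lambda>l. \<Sum>j<n. A (e (\<sigma> l)) i j) \<longlonglongrightarrow> p i"
      using LIMSEQ_subseq_LIMSEQ[OF rows[OF i] \<sigma>(1)] by (simp add: o_def)
    ultimately show "(\<Sum>j<n. L i j) = p i" by (rule LIMSEQ_unique)
  qed
  have L_cols: "(\<Sum>i<m. L i j) = q j" if j: "j<n" for j
  proof -
    have "(\<lambda>l. \<Sum>i<m. A (e (\<sigma> l)) i j) \<longlonglongrightarrow> (\<Sum>i<m. L i j)"
      by (rule tendsto_sum) (use Lc j in blast)
    moreover have "(\<lambda>l. \<Sum>i<m. A (e (\<sigma> l)) i j) = (\<lambda>l. q j)" using cols j by simp
    ultimately have "(\<lambda>l. q j) \<longlonglongrightarrow> (\<Sum>i<m. L i j)" by simp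
    then show "(\<Sum>i<m. L i j) = q j" using LIMSEQ_unique[OF tendsto_const] by metis
  qed
  have good_L: "good L" unfolding good_def
    by (intro conjI allI impI L_nn L_rows L_cols) (auto dest: L_supp)
  have D0: "(\<lambda>l. \<Sum>i<m. \<Sum>j<n. L i j * ln (L i j / A (e (\<sigma> l)) i j)) \<longlonglongrightarrow> (\<Sum>i<m. \<Sum>j<n. 0)"
  proof (intro tendsto_sum)
    fix i j assume "i \<in> {..<m}" "j \<in> {..<n}"
    then have ij: "i<m" "j<n" by auto
    show "(\<lambda>l. L i j * ln (L i j / A (e (\<sigma> l)) i j)) \<longlonglongrightarrow> 0"
    proof (cases "L i j > 0")
      case True
      have "(\<lambda>l. L i j * ln (L i j / A (e (\<sigma> l)) i j)) \<longlonglongrightarrow> L i j * ln (L i j / L i j)"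
        using True Lc[OF ij] by (intro tendsto_intros) auto
      then show ?thesis using True by simp
    next
      case False
      then have "L i j = 0" using good_L ij unfolding good_def by force
      then show ?thesis by simp
    qed
  qed
  have "(\<lambda>l. \<Sum>i<m. \<Sum>j<n. L i j * ln (L i j / A (e (\<sigma> l)) i j)) = (\<lambda>l. CZ L - Psi (e (\<sigma> l)))"
    using D_eq[OF good_L] by simp
  moreover have "(\<lambda>l. CZ L - Psi (e (\<sigma> l))) \<longlonglongrightarrow> CZ L - P"
    using LIMSEQ_subseq_LIMSEQ[OF P es_mono] by (intro tendsto_diff) (auto simp: o_def)
  ultimately have "(\<lambda>l. CZ L - Psi (e (\<sigma> l))) \<longlonglongrightarrow> 0" using D0 by simp
  then have CP: "CZ L - P = 0" using LIMSEQ_unique \<open>(\<lambda>l. CZ L - Psi (e (\<sigma> l))) \<longlonglongrightarrow> CZ L - P\<close> by metis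
  have H0: "(\<lambda>k. CZ L - Psi k) \<longlonglongrightarrow> 0"
    using tendsto_diff[OF tendsto_const P, of "CZ L"] CP by simp
  have "(\<lambda>k. A k i j) \<longlonglongrightarrow> L i j" if ij: "i<m" "j<n" for i j
  proof (rule sqrt_conv)
    show "(\<lambda>k. (sqrt (A k i j) - sqrt (L i j))^2) \<longlonglongrightarrow> 0"
    proof (rule sq_sandwich[OF _ H0])
      show "\<forall>\<^sub>F k in sequentially. 0 \<le> (sqrt (A k i j) - sqrt (L i j))^2 \<and> (sqrt (A k i j) - sqrt (L i j))^2 \<le> CZ L - Psi k"
        unfolding eventually_sequentially
      proof (intro exI[of _ 1] allI impI conjI)
        fix k :: nat assume k: "k \<ge> 1"
        show "0 \<le> (sqrt (A k i j) - sqrt (L i j))^2" by simp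
        have "(sqrt (L i j) - sqrt (A k i j))^2 \<le> (\<Sum>j<n. (sqrt (L i j) - sqrt (A k i j))^2)"
          using ij by (intro member_le_sum) auto
        also have "\<dots> \<le> (\<Sum>i<m. \<Sum>j<n. (sqrt (L i j) - sqrt (A k i j))^2)"
          using ij by (intro member_le_sum sum_nonneg) auto
        also have "\<dots> \<le> CZ L - Psi k" by (rule hell[OF good_L k])
        finally show "(sqrt (A k i j) - sqrt (L i j))^2 \<le> CZ L - Psi k" by (simp add: power2_commute)
      qed
    qed
    show "\<And>k. 0 \<le> A k i j" using A_nn ij by auto
    show "0 \<le> L i j" using good_L ij unfolding good_def by auto
  qed
  then show ?thesis using good_L by blast
qed

end

theorem mainTheorem7:
  fixes m n :: nat
    and X :: "nat \<Rightarrow> nat \<Rightarrow> real"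
    and u v :: "nat \<Rightarrow> real"
    and Y :: "nat \<Rightarrow> nat \<Rightarrow> nat"
    and p q :: "nat \<Rightarrow> real"
  assumes X_nonneg: "\<forall>i<m. \<forall>j<n. X i j \<ge> 0"
    and realization: "biprop_realization m n X u v Y"
    and p_def: "\<forall>i. p i = real (\<Sum>j<n. Y i j)"
    and q_def: "\<forall>j. q j = real (\<Sum>i<m. Y i j)"
  shows "\<exists>L :: nat \<Rightarrow> nat \<Rightarrow> real.
           (\<forall>i<m. \<forall>j<n. (\<lambda>k. ipf_scaled m n X p q k i j) \<longlonglongrightarrow> L i j)
         \<and> (\<forall>i<m. (\<Sum>j<n. L i j) = p i)
         \<and> (\<forall>j<n. (\<Sum>i<m. L i j) = q j)"
proof -
  interpret I: ipfl m n X p q Y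
  proof
    show "\<And>i j. i<m \<Longrightarrow> j<n \<Longrightarrow> X i j \<ge> 0" using X_nonneg by auto
    show "\<And>i j. i<m \<Longrightarrow> j<n \<Longrightarrow> \<not> X i j > 0 \<Longrightarrow> Y i j = 0"
      using realization unfolding biprop_realization_def by auto
    show "\<And>i. p i = real (\<Sum>j<n. Y i j)" using p_def by auto
    show "\<And>j. q j = real (\<Sum>i<m. Y i j)" using q_def by auto
  qed
  have eq: "ipf_scaled m n X p q k i j = I.A k i j" for k i j
    by (simp add: ipf_scaled_def I.A_def I.a_def I.b_def split_def Let_def)
  obtain L where "\<forall>i<m. \<forall>j<n. (\<lambda>k. I.A k i j) \<longlonglongrightarrow> L i j" "I.good L"
    using I.main by blast
  then show ?thesis unfolding eq I.good_def by blast
qed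

end
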